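(* Let $\delta\in(0,1)$ and suppose $\mathbb{L}=\{\mathcal{L}:\mathbb{E}_0[\mathcal{L}]=1\text{ and }\underline L\le\mathcal{L}\le\overline L\}$ for two non-negative scalars $\underline L$ and $\overline L$, and let $$\mathcal{L}^*=\arg\max_{\mathcal{L}\in\mathbb{L}}\mathbb{E}_0\Big[\frac{(1-\mathcal{L})^2}{\delta+(1-\delta)\mathcal{L}}\Big].$$ Then $\mathcal{L}^*$ is a random variable with a two-point distribution with mass at $\underline L$ and $\overline L$.
   Context: $\mathbb{P}_0$ is a probability measure (the law of outcomes under the hypothesis $\Theta=\theta_0$) with expectation $\mathbb{E}_0$; $\mathbb{L}$ is a set of non-negative random variables (likelihood ratios of possible experiments) on this space.
   Formalization: The probability measure $\mathbb{P}_0$ is atomless: every event of positive probability contains an event of strictly smaller positive probability. The paper assumes this as well. *)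

theory Defs
  imports "HOL-Probability.Probability"
begin

definition atomless :: "'a measure \<Rightarrow> bool" where
  "atomless M \<longleftrightarrow> (\<forall>A\<in>sets M. 0 < measure M A \<longrightarrow>
      (\<exists>B\<in>sets M. B \<subseteq> A \<and> 0 < measure M B \<and> measure M B < measure M A))"

definition LR_set :: "'a measure \<Rightarrow> real \<Rightarrow> real \<Rightarrow> ('a \<Rightarrow> real) set" where
  "LR_set M Llo Lhi = {L. L \<in> borel_measurable M \<and> (\<integral>x. L x \<partial>M) = 1 \<and>
      (\<forall>x\<in>space M. Llo \<le> L x \<and> L x \<le> Lhi)}"

definition LR_objective :: "'a measure \<Rightarrow> real \<Rightarrow> ('a \<Rightarrow> real) \<Rightarrow> real" where
  "LR_objective M \<delta> L = (\<integral>x. (1 - L x)\<^sup>2 / (\<delta> + (1 - \<delta>) * L x) \<partial>M)"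

end

theory Submission
  imports Defs
begin

lemma f_repr:
  fixes d l :: real assumes "0<d" "d<1" "0 \<le> l"
  shows "(1-l)^2/(d+(1-d)*l) = (1/(d+(1-d)*l) - 2 + (d+(1-d)*l))/(1-d)^2"
proof -
  have p: "d+(1-d)*l > 0" using assms by (smt (verit) mult_nonneg_nonneg)
  have "(1-l)*(1-d) = 1 - (d+(1-d)*l)" by (simp add: algebra_simps)
  hence e: "(1-l) = (1 - (d+(1-d)*l))/(1-d)" using assms by (simp add: field_simps)
  show ?thesis using p assms unfolding e by (simp add: field_simps power2_eq_square)
qed
lemma inv_conv:
  fixes u k :: real assumes "0 < u+k" "0 < u-k" "k \<noteq> 0"
  shows "1/(u+k) + 1/(u-k) > 2/u"
proof -
  have u: "u > 0" using assms by linarith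
  have "1/(u+k) + 1/(u-k) = 2*u/((u+k)*(u-k))" using assms by (simp add: field_simps)
  also have "(u+k)*(u-k) = u*u - k*k" by (simp add: algebra_simps)
  also have "2*u/(u*u-k*k) > 2/u"
  proof -
    have "k*k > 0" using assms(3) by (cases "k>0") (auto intro: mult_pos_pos mult_neg_neg)
    hence "u*u - k*k < u*u" by simp
    moreover have "u*u-k*k > 0" using assms by (metis calculation \<open>(u + k) * (u - k) = u * u - k * k\<close> mult_pos_pos)
    ultimately show ?thesis using u by (simp add: field_simps)
  qed
  finally show ?thesis .
qed
lemma midconv:
  fixes d l h :: real assumes "0<d" "d<1" "0 \<le> l-h" "0 \<le> l+h" "h \<noteq> 0"
  shows "(1-(l+h))^2/(d+(1-d)*(l+h)) + (1-(l-h))^2/(d+(1-d)*(l-h)) > 2*((1-l)^2/(d+(1-d)*l))"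
proof -
  have l: "0 \<le> l" using assms by linarith
  define u where "u = d+(1-d)*l"
  define k where "k = (1-d)*h"
  have a: "d+(1-d)*(l+h) = u+k" "d+(1-d)*(l-h) = u-k" unfolding u_def k_def by (simp_all add: algebra_simps)
  have p1: "u+k > 0" using a(1) assms by (smt (verit) mult_nonneg_nonneg)
  have p2: "u-k > 0" using a(2) assms by (smt (verit) mult_nonneg_nonneg)
  have k0: "k \<noteq> 0" unfolding k_def using assms by simp
  have ic: "1/(u+k) + 1/(u-k) > 2/u" using inv_conv p1 p2 k0 by blast
  have dpos: "(1-d)^2 > 0" using assms by simp
  have "(1/(u+k) - 2 + (u+k))/(1-d)^2 + (1/(u-k) - 2 + (u-k))/(1-d)^2 > 2*((1/u - 2 + u)/(1-d)^2)"
  proof -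
    have "(1/(u+k) - 2 + (u+k)) + (1/(u-k) - 2 + (u-k)) > 2*(1/u - 2 + u)" using ic by simp
    hence "((1/(u+k) - 2 + (u+k)) + (1/(u-k) - 2 + (u-k)))/(1-d)^2 > (2*(1/u - 2 + u))/(1-d)^2"
      using dpos by (simp add: divide_strict_right_mono)
    moreover have "(1/(u+k) - 2 + (u+k))/(1-d)^2 + (1/(u-k) - 2 + (u-k))/(1-d)^2 = ((1/(u+k) - 2 + (u+k)) + (1/(u-k) - 2 + (u-k)))/(1-d)^2"
      by (rule add_divide_distrib[symmetric])
    moreover have "2*((1/u - 2 + u)/(1-d)^2) = (2*(1/u - 2 + u))/(1-d)^2" by simp
    ultimately show ?thesis by simp
  qed
  thus ?thesis using f_repr[OF assms(1,2) l] f_repr[OF assms(1,2) assms(4)] f_repr[OF assms(1,2) assms(3)]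
    unfolding u_def k_def a[unfolded u_def k_def] by simp
qed

lemma fbound:
  fixes d l H :: real assumes "0<d" "d<1" "0 \<le> l" "l \<le> H"
  shows "norm ((1-l)^2/(d+(1-d)*l)) \<le> (1+H)^2/d"
proof -
  have p: "d+(1-d)*l \<ge> d" using assms by (simp add: mult_nonneg_nonneg)
  have "(1-l)^2/(d+(1-d)*l) \<le> (1-l)^2/d"
  proof (rule divide_left_mono)
    have "0 < d + (1 - d) * l" using p assms by linarith
    thus "0 < (d + (1 - d) * l) * d" using assms by simp
  qed (use p assms in auto)
  also have "(1-l)^2 \<le> (1+H)^2"
  proof -
    have "\<bar>1-l\<bar> \<le> 1+H" using assms by linarith
    hence "\<bar>1-l\<bar>^2 \<le> (1+H)^2" by (intro power_mono) auto
    thus ?thesis by simp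
  qed
  hence "(1-l)^2/d \<le> (1+H)^2/d" using assms by (simp add: divide_right_mono)
  finally have "(1-l)^2/(d+(1-d)*l) \<le> (1+H)^2/d" .
  moreover have "(1-l)^2/(d+(1-d)*l) \<ge> 0" using p assms by simp
  ultimately show ?thesis by (metis real_norm_def abs_of_nonneg)
qed

theorem proposition9:
  fixes M :: "'a measure" and \<delta> Llo Lhi :: real and Lstar :: "'a \<Rightarrow> real"
  assumes "prob_space M"
    and "atomless M"
    and "0 < \<delta>" and "\<delta> < 1"
    and "0 \<le> Llo" and "0 \<le> Lhi"
    and "Lstar \<in> LR_set M Llo Lhi"
    and "\<forall>L\<in>LR_set M Llo Lhi. LR_objective M \<delta> L \<le> LR_objective M \<delta> Lstar"
  shows "AE x in M. Lstar x = Llo \<or> Lstar x = Lhi"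
proof (rule ccontr)
  assume nAE: "\<not> (AE x in M. Lstar x = Llo \<or> Lstar x = Lhi)"
  interpret P: prob_space M by fact
  define f where "f = (\<lambda>l::real. (1-l)^2/(\<delta>+(1-\<delta>)*l))"
  have obj: "\<And>L. LR_objective M \<delta> L = (\<integral>x. f (L x) \<partial>M)" unfolding LR_objective_def f_def by simp
  from assms(7) have Lm[measurable]: "Lstar \<in> borel_measurable M" and Li: "(\<integral>x. Lstar x \<partial>M) = 1"
     and Lb: "\<And>x. x\<in>space M \<Longrightarrow> Llo \<le> Lstar x \<and> Lstar x \<le> Lhi" unfolding LR_set_def by auto
  have fint: "integrable M (\<lambda>x. f (L x))" if "L \<in> LR_set M Llo Lhi" for L
  proof -
    from that have [measurable]: "L \<in> borel_measurable M" and b: "\<And>x. x\<in>space M \<Longrightarrow> Llo \<le> L x \<and> L x \<le> Lhi"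
      unfolding LR_set_def by auto
    show ?thesis
    proof (rule P.integrable_const_bound[where B="(1+Lhi)^2/\<delta>"])
      show "AE x in M. norm (f (L x)) \<le> (1+Lhi)^2/\<delta>"
        using b assms(3,4,5) unfolding f_def by (intro AE_I2 fbound) (auto intro: order_trans)
      show "(\<lambda>x. f (L x)) \<in> borel_measurable M" unfolding f_def by measurable
    qed
  qed
  have Lint: "integrable M Lstar"
  proof (rule P.integrable_const_bound[where B="Lhi"])
    show "AE x in M. norm (Lstar x) \<le> Lhi" using Lb assms(5) by (intro AE_I2) (force simp: abs_le_iff)
  qed simp
  define S where "S = (\<lambda>e. {x\<in>space M. Llo + e \<le> Lstar x \<and> Lstar x \<le> Lhi - e})"
  have Ssets: "\<And>e. S e \<in> sets M" unfolding S_def by measurable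
  have Ssub: "\<And>e. S e \<subseteq> space M" unfolding S_def by auto
  have "\<exists>n::nat. P.prob (S (1/real (Suc n))) > 0"
  proof (rule ccontr)
    assume "\<not> ?thesis"
    hence z: "P.prob (S (1/real (Suc n))) = 0" for n
      using measure_nonneg[of M "S (1/real (Suc n))"] by (meson not_less order.antisym)
    have "AE x in M. x \<notin> S (1/real (Suc n))" for n
    proof (rule AE_not_in)
      show "S (1/real (Suc n)) \<in> null_sets M" using z[of n] Ssets
        by (intro null_setsI) (auto simp: P.emeasure_eq_measure)
    qed
    hence "AE x in M. \<forall>n. x \<notin> S (1/real (Suc n))" by (simp add: AE_all_countable)
    hence "AE x in M. Lstar x = Llo \<or> Lstar x = Lhi"
      using AE_space
    proof eventually_elim
      case (elim x)
      show ?case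
      proof (rule ccontr)
        assume "\<not> ?case"
        hence lt: "Llo < Lstar x" "Lstar x < Lhi" using Lb[OF elim(2)] by auto
        then obtain n where n: "inverse (real (Suc n)) < min (Lstar x - Llo) (Lhi - Lstar x)"
          using reals_Archimedean[of "min (Lstar x - Llo) (Lhi - Lstar x)"] by auto
        hence "x \<in> S (1/real (Suc n))" unfolding S_def using elim(2) by (auto simp: inverse_eq_divide)
        thus False using elim(1) by blast
      qed
    qed
    thus False using nAE by blast
  qed
  then obtain n :: nat where n: "P.prob (S (1/real (Suc n))) > 0" by blast
  define \<epsilon> where "\<epsilon> = 1/real (Suc n)"
  have \<epsilon>pos: "\<epsilon> > 0" unfolding \<epsilon>_def by simp
  define T where "T = S \<epsilon>"
  have T: "T \<in> sets M" "T \<subseteq> space M" "P.prob T > 0" using Ssets Ssub n unfolding T_def \<epsilon>_def by auto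
  obtain B where B: "B \<in> sets M" "B \<subseteq> T" "0 < P.prob B" "P.prob B < P.prob T"
    using assms(2) T unfolding atomless_def by blast
  define A where "A = T - B"
  have A: "A \<in> sets M" "A \<subseteq> T" unfolding A_def using T B by auto
  have pA: "P.prob A = P.prob T - P.prob B" unfolding A_def using T B by (intro P.finite_measure_Diff) auto
  define pa where "pa = P.prob A"
  define pb where "pb = P.prob B"
  have pa: "pa > 0" using pA B unfolding pa_def by simp
  have pb: "pb > 0" using B unfolding pb_def by simp
  define \<eta> where "\<eta> = \<epsilon> * min pa pb"
  have \<eta>pos: "\<eta> > 0" unfolding \<eta>_def using \<epsilon>pos pa pb by simp
  have \<eta>a: "\<eta>/pa \<le> \<epsilon>" unfolding \<eta>_def using \<epsilon>pos pa pb
    by (simp add: divide_le_eq mult_left_mono)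
  have \<eta>b: "\<eta>/pb \<le> \<epsilon>" unfolding \<eta>_def using \<epsilon>pos pa pb
    by (simp add: divide_le_eq mult_left_mono)
  define h where "h = (\<lambda>x. (\<eta>/pa) * indicator A x - (\<eta>/pb) * indicator B x)"
  have hm[measurable]: "h \<in> borel_measurable M" unfolding h_def using A B by measurable
  have hint: "integrable M h" unfolding h_def using A(1) B(1)
    by (intro Bochner_Integration.integrable_diff integrable_mult_right integrable_real_indicator) 
       (auto simp: P.emeasure_eq_measure)
  have hI: "(\<integral>x. h x \<partial>M) = 0"
  proof -
    have "(\<integral>x. h x \<partial>M) = (\<eta>/pa) * P.prob (A \<inter> space M) - (\<eta>/pb) * P.prob (B \<inter> space M)"
      unfolding h_def using A(1) B(1)
      by (subst Bochner_Integration.integral_diff) 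
         (auto intro!: integrable_mult_right integrable_real_indicator simp: P.emeasure_eq_measure)
    also have "A \<inter> space M = A" using A T by auto
    also have "B \<inter> space M = B" using B T by auto
    finally show ?thesis using pa pb unfolding pa_def pb_def by simp
  qed
  have hA: "h x = \<eta>/pa" if "x \<in> A" for x using that unfolding h_def A_def by auto
  have hB: "h x = - (\<eta>/pb)" if "x \<in> B" for x using that unfolding h_def A_def by auto
  have h0: "h x = 0" if "x \<notin> T" for x proof -
    have "x \<notin> A" "x \<notin> B" using that A B by auto
    thus ?thesis unfolding h_def by simp
  qed
  have hb: "\<bar>h x\<bar> \<le> \<epsilon>" for x
    using hA hB h0 \<eta>a \<eta>b \<eta>pos pa pb \<epsilon>pos
    by (cases "x \<in> A"; cases "x \<in> B") (auto simp: h_def indicator_def)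
  have bnd: "Llo \<le> Lstar x + s * h x \<and> Lstar x + s * h x \<le> Lhi" if "x \<in> space M" "s = 1 \<or> s = -1" for x s
  proof (cases "x \<in> T")
    case True
    hence "Llo + \<epsilon> \<le> Lstar x \<and> Lstar x \<le> Lhi - \<epsilon>" unfolding T_def S_def by auto
    then show ?thesis using hb[of x] that(2) by auto
  next
    case False
    then show ?thesis using h0 Lb that by auto
  qed
  define L1 where "L1 = (\<lambda>x. Lstar x + 1 * h x)"
  define L2 where "L2 = (\<lambda>x. Lstar x + (-1) * h x)"
  have L1: "L1 \<in> LR_set M Llo Lhi" unfolding LR_set_def L1_def
    using bnd[of _ 1] Li hI Lint hint by (auto)
  have L2: "L2 \<in> LR_set M Llo Lhi" unfolding LR_set_def L2_def
    using bnd[of _ "-1"] Li hI Lint hint by (auto)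
  define g where "g = (\<lambda>x. f (L1 x) + f (L2 x) - 2 * f (Lstar x))"
  have gint: "integrable M g" unfolding g_def using fint[OF L1] fint[OF L2] fint[OF assms(7)] by auto
  have gI: "(\<integral>x. g x \<partial>M) = LR_objective M \<delta> L1 + LR_objective M \<delta> L2 - 2 * LR_objective M \<delta> Lstar"
    unfolding g_def obj using fint[OF L1] fint[OF L2] fint[OF assms(7)] by simp
  have gpos: "g x > 0" if "x \<in> space M" "h x \<noteq> 0" for x
  proof -
    have "Llo \<le> Lstar x - h x" "Llo \<le> Lstar x + h x" using bnd[OF that(1), of 1] bnd[OF that(1), of "-1"] by auto
    hence "0 \<le> Lstar x - h x" "0 \<le> Lstar x + h x" using assms(5) by auto
    from midconv[OF assms(3,4) this that(2)] show ?thesis unfolding g_def f_def L1_def L2_def by simp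
  qed
  have gnn: "AE x in M. 0 \<le> g x"
  proof (rule AE_I2)
    fix x assume x: "x \<in> space M"
    show "0 \<le> g x"
    proof (cases "h x = 0")
      case True thus ?thesis unfolding g_def L1_def L2_def by simp
    next
      case False thus ?thesis using gpos[OF x] by fastforce
    qed
  qed
  have "(\<integral>x. g x \<partial>M) \<le> 0" using gI assms(8) L1 L2 by (smt (verit))
  moreover have "(\<integral>x. g x \<partial>M) \<ge> 0" using gnn by (simp add: integral_nonneg_AE)
  ultimately have "(\<integral>x. g x \<partial>M) = 0" by simp
  hence "AE x in M. g x = 0" using integral_nonneg_eq_0_iff_AE[OF gint gnn] by simp
  hence "AE x in M. x \<notin> A"
    using AE_space
  proof eventually_elim
    case (elim x)
    show ?case
    proof
      assume "x \<in> A"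
      hence "h x \<noteq> 0" using hA \<eta>pos pa by auto
      thus False using gpos elim by force
    qed
  qed
  hence "emeasure M A = 0"
    using AE_iff_measurable[of A M "\<lambda>x. x \<notin> A"] A T by auto
  thus False using pa unfolding pa_def by (simp add: P.emeasure_eq_measure)
qed

end
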